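(* Let $M(C,\bar\xi,\pi)$ be a Myller configuration with Darboux frame $(\bar\xi,\bar\mu,\bar v)$ and invariants $G,K,T$, with $(T,K)\neq(0,0)$ everywhere. Then: (i) if $K\equiv0$, $C$ is a $\bar v$-helix iff $\sigma_v=\mp G/T$ is constant; (ii) if $G\equiv0$, $C$ is a $\bar v$-helix iff $\sigma_v=\mp\dfrac{T'K-TK'}{(T^2+K^2)^{3/2}}$ is constant; (iii) if $T\equiv0$, $C$ is a $\bar v$-helix iff $\sigma_v=\mp G/K$ is constant.
   Context: Let $C$ be a smooth curve in $E^3$ parametrized by arclength $s$; primes denote $d/ds$. A Myller configuration $M(C,\bar\xi,\pi)$ consists of a smooth unit vector field $\bar\xi$ along $C$ and a smooth oriented plane field $\pi$ with $\bar\xi\in\pi$; $\bar v$ is the unit normal of $\pi$, $\bar\mu=\bar v\times\bar\xi$, and $\bar\xi'=G\bar\mu+K\bar v$, $\bar\mu'=-G\bar\xi+T\bar v$, $\bar v'=-K\bar\xi-T\bar\mu$. $C$ is a $\bar v$-helix if $\langle\bar v,\bar d_v\rangle$ is constant along $C$ for some constant unit vector $\bar d_v$. *)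

theory Defs
  imports "HOL-Analysis.Analysis" "HOL-Analysis.Cross3"
begin

definition smooth_on :: "real set \<Rightarrow> (real \<Rightarrow> 'a::real_normed_vector) \<Rightarrow> bool" where
  "smooth_on I f \<longleftrightarrow>
     (\<exists>D :: nat \<Rightarrow> real \<Rightarrow> 'a. D 0 = f \<and>
        (\<forall>n. \<forall>s\<in>I. (D n has_vector_derivative D (Suc n) s) (at s)))"

text \<open>The oriented plane field pi is represented by its unit normal field v;
  mu = v x xi; G, K, T are the invariants given by the Darboux-type derivative formulas.\<close>
definition myller_configuration ::
  "real set \<Rightarrow> (real \<Rightarrow> real^3) \<Rightarrow> (real \<Rightarrow> real^3) \<Rightarrow> (real \<Rightarrow> real^3) \<Rightarrow> (real \<Rightarrow> real^3)
   \<Rightarrow> (real \<Rightarrow> real) \<Rightarrow> (real \<Rightarrow> real) \<Rightarrow> (real \<Rightarrow> real) \<Rightarrow> bool" where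
  "myller_configuration I C xi mu v G K T \<longleftrightarrow>
     open I \<and> is_interval I \<and> I \<noteq> {} \<and>
     smooth_on I C \<and> smooth_on I xi \<and> smooth_on I v \<and>
     (\<forall>s\<in>I.
        norm (vector_derivative C (at s)) = 1 \<and>
        norm (xi s) = 1 \<and> norm (v s) = 1 \<and> xi s \<bullet> v s = 0 \<and>
        mu s = cross3 (v s) (xi s) \<and>
        (xi has_vector_derivative (G s *\<^sub>R mu s + K s *\<^sub>R v s)) (at s) \<and>
        (mu has_vector_derivative (- G s *\<^sub>R xi s + T s *\<^sub>R v s)) (at s) \<and>
        (v has_vector_derivative (- K s *\<^sub>R xi s - T s *\<^sub>R mu s)) (at s))"

definition v_helix :: "real set \<Rightarrow> (real \<Rightarrow> real^3) \<Rightarrow> bool" where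
  "v_helix I v \<longleftrightarrow> (\<exists>d. norm d = 1 \<and> (\<exists>c. \<forall>s\<in>I. v s \<bullet> d = c))"

end

theory Submission
  imports Defs
begin


lemma L_inner:
  fixes f :: "real \<Rightarrow> real^3"
  assumes "(f has_vector_derivative f') (at s)"
  shows "((\<lambda>t. f t \<bullet> e) has_real_derivative (f' \<bullet> e)) (at s)"
proof -
  have "((\<lambda>t. f t \<bullet> e) has_derivative (\<lambda>h. (h *\<^sub>R f') \<bullet> e)) (at s)"
    using assms unfolding has_vector_derivative_def by (intro has_derivative_inner_left)
  moreover have "(\<lambda>h. (h *\<^sub>R f') \<bullet> e) = (*) (f' \<bullet> e)" by (auto simp: fun_eq_iff)
  ultimately show ?thesis unfolding has_field_derivative_def by simp
qed

lemma L_inner2: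
  fixes f g :: "real \<Rightarrow> real^3"
  assumes "(f has_vector_derivative f') (at s)" "(g has_vector_derivative g') (at s)"
  shows "((\<lambda>t. f t \<bullet> g t) has_real_derivative (f s \<bullet> g' + f' \<bullet> g s)) (at s)"
proof -
  have "((\<lambda>t. f t \<bullet> g t) has_derivative (\<lambda>h. f s \<bullet> (h *\<^sub>R g') + (h *\<^sub>R f') \<bullet> g s)) (at s)"
    using assms unfolding has_vector_derivative_def by (intro has_derivative_inner)
  moreover have "(\<lambda>h. f s \<bullet> (h *\<^sub>R g') + (h *\<^sub>R f') \<bullet> g s) = (*) (f s \<bullet> g' + f' \<bullet> g s)"
    by (auto simp: fun_eq_iff algebra_simps)
  ultimately show ?thesis unfolding has_field_derivative_def by simp
qed

lemma L_const:
  assumes "convex I" "\<And>s. s \<in> I \<Longrightarrow> (g has_real_derivative 0) (at s)"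
  shows "\<exists>c. \<forall>s\<in>I. g s = c"
  using assms by (intro has_field_derivative_zero_constant) (auto intro: has_field_derivative_at_within)

lemma L_deriv_of_const:
  assumes "open I" "s \<in> I" "\<forall>t\<in>I. g t = c" "(g has_real_derivative D) (at s)"
  shows "D = 0"
proof -
  have "((\<lambda>t. c) has_real_derivative D) (at s)"
    by (rule has_field_derivative_transform_within_open[OF assms(4) assms(1,2)]) (use assms(3) in auto)
  then show ?thesis using DERIV_const DERIV_unique by blast
qed

lemma L_triple: "cross3 (cross3 (x::real^3) y) z = (x \<bullet> z) *\<^sub>R y - (y \<bullet> z) *\<^sub>R x"
  by (simp add: cross3_simps forall_3)

lemma L_zero:
  fixes x y d :: "real^3"
  assumes "norm x = 1" "norm y = 1" "x \<bullet> y = 0" "d \<bullet> x = 0" "d \<bullet> y = 0" "d \<bullet> cross3 x y = 0"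
  shows "d = 0"
proof -
  have h: "(norm (cross3 x y))\<^sup>2 = 1\<^sup>2" using norm_cross_dot[of x y] assms(1-3) by simp
  have n: "norm (cross3 x y) = 1" using power2_eq_iff_nonneg[of "norm (cross3 x y)" 1] h by simp
  have "cross3 (cross3 x y) d = 0" using assms(4,5) by (simp add: L_triple inner_commute)
  then have "(norm (cross3 x y) * norm d)\<^sup>2 = 0" using norm_cross_dot[of "cross3 x y" d] assms(6)
    by (simp add: inner_commute)
  then show ?thesis using n by simp
qed

lemma L_vec_const:
  fixes F :: "real \<Rightarrow> real^3"
  assumes "convex I" "\<And>e s. s \<in> I \<Longrightarrow> ((\<lambda>t. F t \<bullet> e) has_real_derivative 0) (at s)"
  shows "\<exists>d. \<forall>s\<in>I. F s = d"
proof (cases "I = {}")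
  case False
  then obtain s0 where s0: "s0 \<in> I" by auto
  have "F s = F s0" if "s \<in> I" for s
  proof -
    obtain c where c: "\<forall>t\<in>I. F t \<bullet> (F s - F s0) = c"
      using L_const[OF assms(1), of "\<lambda>t. F t \<bullet> (F s - F s0)"] assms(2) by blast
    have "(F s - F s0) \<bullet> (F s - F s0) = 0" using c that s0 by (simp add: inner_diff_left)
    then show ?thesis by simp
  qed
  then show ?thesis by blast
qed auto

lemma L_helix:
  assumes "\<forall>s\<in>I. v s \<bullet> d = c" "d \<noteq> 0"
  shows "v_helix I v"
  unfolding v_helix_def
proof (intro exI conjI)
  show "norm (d /\<^sub>R norm d) = 1" using assms by simp
  show "\<forall>s\<in>I. v s \<bullet> (d /\<^sub>R norm d) = c / norm d" using assms(1) by (simp add: divide_inverse)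
qed

lemma L_powr: "(x::real) > 0 \<Longrightarrow> x powr (3/2) = x * sqrt x"
proof -
  assume "x > 0"
  have a: "x powr (1 + 1/2) = x powr 1 * x powr (1/2)" by (rule powr_add)
  have b: "(1 + 1/2::real) = 3/2" by simp
  show ?thesis using a \<open>x > 0\<close> unfolding b by (simp add: powr_half_sqrt)
qed

lemma frame:
  assumes M: "myller_configuration I C xi mu v G K T" and s: "s \<in> I"
  shows "xi s \<bullet> xi s = 1" "v s \<bullet> v s = 1" "xi s \<bullet> v s = 0" "v s \<bullet> xi s = 0"
    "mu s \<bullet> mu s = 1" "mu s \<bullet> xi s = 0" "mu s \<bullet> v s = 0" "xi s \<bullet> mu s = 0" "v s \<bullet> mu s = 0"
    "mu s = cross3 (v s) (xi s)"
proof -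
  have A: "norm (xi s) = 1" "norm (v s) = 1" "xi s \<bullet> v s = 0" "mu s = cross3 (v s) (xi s)"
    using M s unfolding myller_configuration_def by auto
  show x: "xi s \<bullet> xi s = 1" "v s \<bullet> v s = 1" using A by (simp_all add: dot_square_norm)
  show "xi s \<bullet> v s = 0" "v s \<bullet> xi s = 0" using A by (simp_all add: inner_commute)
  show "mu s = cross3 (v s) (xi s)" by fact
  have h: "(norm (mu s))\<^sup>2 = 1" using norm_cross_dot[of "v s" "xi s"] A by (simp add: inner_commute)
  then show "mu s \<bullet> mu s = 1" by (simp add: dot_square_norm)
  show "mu s \<bullet> xi s = 0" "mu s \<bullet> v s = 0" "xi s \<bullet> mu s = 0" "v s \<bullet> mu s = 0"
    using A(4) dot_cross_self[of "v s" "xi s"] by (simp_all add: inner_commute)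
qed

lemma dscal:
  assumes M: "myller_configuration I C xi mu v G K T" and s: "s \<in> I"
  shows "((\<lambda>t. xi t \<bullet> e) has_real_derivative (G s * (mu s \<bullet> e) + K s * (v s \<bullet> e))) (at s)"
    "((\<lambda>t. mu t \<bullet> e) has_real_derivative (- G s * (xi s \<bullet> e) + T s * (v s \<bullet> e))) (at s)"
    "((\<lambda>t. v t \<bullet> e) has_real_derivative (- K s * (xi s \<bullet> e) - T s * (mu s \<bullet> e))) (at s)"
proof -
  have A: "(xi has_vector_derivative (G s *\<^sub>R mu s + K s *\<^sub>R v s)) (at s)"
      "(mu has_vector_derivative (- G s *\<^sub>R xi s + T s *\<^sub>R v s)) (at s)"
      "(v has_vector_derivative (- K s *\<^sub>R xi s - T s *\<^sub>R mu s)) (at s)"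
    using M s unfolding myller_configuration_def by auto
  show "((\<lambda>t. xi t \<bullet> e) has_real_derivative (G s * (mu s \<bullet> e) + K s * (v s \<bullet> e))) (at s)"
    using L_inner[OF A(1), of e] by (simp add: inner_add_left)
  show "((\<lambda>t. mu t \<bullet> e) has_real_derivative (- G s * (xi s \<bullet> e) + T s * (v s \<bullet> e))) (at s)"
    using L_inner[OF A(2), of e] by (simp add: inner_add_left inner_diff_left)
  show "((\<lambda>t. v t \<bullet> e) has_real_derivative (- K s * (xi s \<bullet> e) - T s * (mu s \<bullet> e))) (at s)"
    using L_inner[OF A(3), of e] by (simp add: inner_diff_left)
qed

lemma dTK:
  assumes M: "myller_configuration I C xi mu v G K T" and s: "s \<in> I"
  shows "(T has_real_derivative deriv T s) (at s)" "(K has_real_derivative deriv K s) (at s)"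
proof -
  have op: "open I" using M unfolding myller_configuration_def by auto
  obtain D where D: "D 0 = v" "\<And>n t. t \<in> I \<Longrightarrow> (D n has_vector_derivative D (Suc n) t) (at t)"
  proof -
    have "smooth_on I v" using M unfolding myller_configuration_def by auto
    then show ?thesis using that unfolding smooth_on_def by blast
  qed
  have vd: "\<And>t. t \<in> I \<Longrightarrow> (v has_vector_derivative (- K t *\<^sub>R xi t - T t *\<^sub>R mu t)) (at t)"
      "\<And>t. t \<in> I \<Longrightarrow> (mu has_vector_derivative (- G t *\<^sub>R xi t + T t *\<^sub>R v t)) (at t)"
      "\<And>t. t \<in> I \<Longrightarrow> (xi has_vector_derivative (G t *\<^sub>R mu t + K t *\<^sub>R v t)) (at t)"
    using M unfolding myller_configuration_def by auto
  have D1: "D 1 t = - K t *\<^sub>R xi t - T t *\<^sub>R mu t" if "t \<in> I" for t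
  proof -
    have "(v has_vector_derivative D 1 t) (at t)" using D(2)[OF that, of 0] D(1) by simp
    then show ?thesis using vector_derivative_unique_at vd(1)[OF that] by blast
  qed
  have Te: "T t = - (D 1 t \<bullet> mu t)" if "t \<in> I" for t
    using frame[OF M that] D1[OF that] by (simp add: inner_diff_left)
  have Ke: "K t = - (D 1 t \<bullet> xi t)" if "t \<in> I" for t
    using frame[OF M that] D1[OF that] by (simp add: inner_diff_left)
  have g1: "((\<lambda>t. - (D 1 t \<bullet> mu t)) has_real_derivative - (D 1 s \<bullet> (- G s *\<^sub>R xi s + T s *\<^sub>R v s) + D 2 s \<bullet> mu s)) (at s)"
    using DERIV_minus[OF L_inner2[OF D(2)[OF s, of 1] vd(2)[OF s]]] by (simp add: numeral_2_eq_2)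
  have g2: "((\<lambda>t. - (D 1 t \<bullet> xi t)) has_real_derivative - (D 1 s \<bullet> (G s *\<^sub>R mu s + K s *\<^sub>R v s) + D 2 s \<bullet> xi s)) (at s)"
    using DERIV_minus[OF L_inner2[OF D(2)[OF s, of 1] vd(3)[OF s]]] by (simp add: numeral_2_eq_2)
  have "(T has_real_derivative - (D 1 s \<bullet> (- G s *\<^sub>R xi s + T s *\<^sub>R v s) + D 2 s \<bullet> mu s)) (at s)"
    by (rule has_field_derivative_transform_within_open[OF g1 op s]) (simp add: Te)
  then show "(T has_real_derivative deriv T s) (at s)"
    using DERIV_imp_deriv by fastforce
  have "(K has_real_derivative - (D 1 s \<bullet> (G s *\<^sub>R mu s + K s *\<^sub>R v s) + D 2 s \<bullet> xi s)) (at s)"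
    by (rule has_field_derivative_transform_within_open[OF g2 op s]) (simp add: Ke)
  then show "(K has_real_derivative deriv K s) (at s)"
    using DERIV_imp_deriv by fastforce
qed



lemma basics:
  assumes M: "myller_configuration I C xi mu v G K T"
  shows "open I" "convex I" "I \<noteq> {}"
  using M unfolding myller_configuration_def by (auto intro: is_interval_convex)

lemma part1:
  assumes M: "myller_configuration I C xi mu v G K T"
    and nondeg: "\<forall>s\<in>I. (T s, K s) \<noteq> (0, 0)"
    and K0: "\<forall>s\<in>I. K s = 0"
  shows "v_helix I v \<longleftrightarrow> (\<exists>c. \<forall>s\<in>I. - (G s / T s) = c)"
proof
  note B = basics[OF M]
  have T0: "T s \<noteq> 0" if "s \<in> I" for s using nondeg K0 that by auto
  assume "v_helix I v"
  then obtain d c where d: "norm d = 1" "\<forall>s\<in>I. v s \<bullet> d = c" unfolding v_helix_def by auto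
  have m0: "mu s \<bullet> d = 0" if s: "s \<in> I" for s
  proof -
    have "- K s * (xi s \<bullet> d) - T s * (mu s \<bullet> d) = 0"
      by (rule L_deriv_of_const[OF B(1) s d(2) dscal(3)[OF M s]])
    then show ?thesis using K0 T0 s by simp
  qed
  have Gc: "- G s * (xi s \<bullet> d) + T s * c = 0" if s: "s \<in> I" for s
  proof -
    have "- G s * (xi s \<bullet> d) + T s * (v s \<bullet> d) = 0"
      by (rule L_deriv_of_const[OF B(1) s _ dscal(2)[OF M s]]) (use m0 in auto)
    then show ?thesis using d s by simp
  qed
  obtain a where a: "\<forall>s\<in>I. xi s \<bullet> d = a"
  proof -
    have "\<exists>a. \<forall>s\<in>I. xi s \<bullet> d = a"
    proof (rule L_const[OF B(2)])
      fix s assume s: "s \<in> I"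
      show "((\<lambda>t. xi t \<bullet> d) has_real_derivative 0) (at s)"
        using dscal(1)[OF M s, of d] m0[OF s] K0 s by simp
    qed
    then show ?thesis using that by blast
  qed
  obtain s0 where s0: "s0 \<in> I" using B(3) by auto
  have "a \<noteq> 0"
  proof
    assume "a = 0"
    then have "c = 0" using Gc[OF s0] a s0 T0[OF s0] by simp
    then have "d = 0" using L_zero[of "v s0" "xi s0" d] frame[OF M s0] M s0 m0[OF s0] a d(2) \<open>a = 0\<close>
      unfolding myller_configuration_def by (auto simp: inner_commute)
    then show False using d by simp
  qed
  have "- (G s / T s) = - (c / a)" if s: "s \<in> I" for s
    using Gc[OF s] a s T0[OF s] \<open>a \<noteq> 0\<close> by (simp add: field_simps)
  then show "\<exists>c. \<forall>s\<in>I. - (G s / T s) = c" by blast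
next
  note B = basics[OF M]
  have T0: "T s \<noteq> 0" if "s \<in> I" for s using nondeg K0 that by auto
  assume "\<exists>c. \<forall>s\<in>I. - (G s / T s) = c"
  then obtain c0 where c0: "\<forall>s\<in>I. - (G s / T s) = c0" by auto
  define k where "k = - c0"
  have Gk: "G s = k * T s" if "s \<in> I" for s using c0 that T0[OF that] unfolding k_def
    by (auto simp: field_simps)
  define F where "F t = xi t + k *\<^sub>R v t" for t
  obtain d where dF: "\<forall>s\<in>I. F s = d"
  proof -
    have "\<exists>d. \<forall>s\<in>I. F s = d"
    proof (rule L_vec_const[OF B(2)])
      fix e s assume s: "s \<in> I"
      have e: "(\<lambda>t. F t \<bullet> e) = (\<lambda>t. xi t \<bullet> e + k * (v t \<bullet> e))"
        unfolding F_def by (simp add: inner_add_left)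
      have "((\<lambda>t. xi t \<bullet> e + k * (v t \<bullet> e)) has_real_derivative
          (G s * (mu s \<bullet> e) + K s * (v s \<bullet> e)) + k * (- K s * (xi s \<bullet> e) - T s * (mu s \<bullet> e))) (at s)"
        by (intro DERIV_add DERIV_cmult dscal[OF M s])
      moreover have "(G s * (mu s \<bullet> e) + K s * (v s \<bullet> e)) + k * (- K s * (xi s \<bullet> e) - T s * (mu s \<bullet> e)) = 0"
        using Gk[OF s] K0 s by (simp add: algebra_simps)
      ultimately show "((\<lambda>t. F t \<bullet> e) has_real_derivative 0) (at s)" unfolding e by simp
    qed
    then show ?thesis using that by blast
  qed
  obtain s0 where s0: "s0 \<in> I" using B(3) by auto
  have "\<forall>s\<in>I. v s \<bullet> d = k"
  proof
    fix s assume s: "s \<in> I"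
    have "v s \<bullet> F s = k" unfolding F_def using frame[OF M s] by (simp add: inner_add_right)
    then show "v s \<bullet> d = k" using dF s by simp
  qed
  moreover have "d \<noteq> 0"
  proof
    assume "d = 0"
    have "xi s0 \<bullet> F s0 = 1" unfolding F_def using frame[OF M s0] by (simp add: inner_add_right)
    then show False using dF s0 \<open>d = 0\<close> by simp
  qed
  ultimately show "v_helix I v" by (rule L_helix)
qed



lemma part3:
  assumes M: "myller_configuration I C xi mu v G K T"
    and nondeg: "\<forall>s\<in>I. (T s, K s) \<noteq> (0, 0)"
    and T0': "\<forall>s\<in>I. T s = 0"
  shows "v_helix I v \<longleftrightarrow> (\<exists>c. \<forall>s\<in>I. - (G s / K s) = c)"
proof
  note B = basics[OF M]
  have K0: "K s \<noteq> 0" if "s \<in> I" for s using nondeg T0' that by auto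
  assume "v_helix I v"
  then obtain d c where d: "norm d = 1" "\<forall>s\<in>I. v s \<bullet> d = c" unfolding v_helix_def by auto
  have a0: "xi s \<bullet> d = 0" if s: "s \<in> I" for s
  proof -
    have "- K s * (xi s \<bullet> d) - T s * (mu s \<bullet> d) = 0"
      by (rule L_deriv_of_const[OF B(1) s d(2) dscal(3)[OF M s]])
    then show ?thesis using T0' K0 s by simp
  qed
  have Gc: "G s * (mu s \<bullet> d) + K s * c = 0" if s: "s \<in> I" for s
  proof -
    have "G s * (mu s \<bullet> d) + K s * (v s \<bullet> d) = 0"
      by (rule L_deriv_of_const[OF B(1) s _ dscal(1)[OF M s]]) (use a0 in auto)
    then show ?thesis using d s by simp
  qed
  obtain a where a: "\<forall>s\<in>I. mu s \<bullet> d = a"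
  proof -
    have "\<exists>a. \<forall>s\<in>I. mu s \<bullet> d = a"
    proof (rule L_const[OF B(2)])
      fix s assume s: "s \<in> I"
      show "((\<lambda>t. mu t \<bullet> d) has_real_derivative 0) (at s)"
        using dscal(2)[OF M s, of d] a0[OF s] T0' s by simp
    qed
    then show ?thesis using that by blast
  qed
  obtain s0 where s0: "s0 \<in> I" using B(3) by auto
  have "a \<noteq> 0"
  proof
    assume "a = 0"
    then have "c = 0" using Gc[OF s0] a s0 K0[OF s0] by simp
    then have "d = 0" using L_zero[of "v s0" "xi s0" d] frame[OF M s0] M s0 a0[OF s0] a d(2) \<open>a = 0\<close>
      unfolding myller_configuration_def by (auto simp: inner_commute)
    then show False using d by simp
  qed
  have "- (G s / K s) = c / a" if s: "s \<in> I" for s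
    using Gc[OF s] a s K0[OF s] \<open>a \<noteq> 0\<close> by (simp add: field_simps)
  then show "\<exists>c. \<forall>s\<in>I. - (G s / K s) = c" by blast
next
  note B = basics[OF M]
  have K0: "K s \<noteq> 0" if "s \<in> I" for s using nondeg T0' that by auto
  assume "\<exists>c. \<forall>s\<in>I. - (G s / K s) = c"
  then obtain c0 where c0: "\<forall>s\<in>I. - (G s / K s) = c0" by auto
  define k where "k = - c0"
  have Gk: "G s = k * K s" if "s \<in> I" for s using c0 that K0[OF that] unfolding k_def
    by (auto simp: field_simps)
  define F where "F t = mu t - k *\<^sub>R v t" for t
  obtain d where dF: "\<forall>s\<in>I. F s = d"
  proof -
    have "\<exists>d. \<forall>s\<in>I. F s = d"
    proof (rule L_vec_const[OF B(2)])
      fix e s assume s: "s \<in> I"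
      have e: "(\<lambda>t. F t \<bullet> e) = (\<lambda>t. mu t \<bullet> e - k * (v t \<bullet> e))"
        unfolding F_def by (simp add: inner_diff_left)
      have "((\<lambda>t. mu t \<bullet> e - k * (v t \<bullet> e)) has_real_derivative
          (- G s * (xi s \<bullet> e) + T s * (v s \<bullet> e)) - k * (- K s * (xi s \<bullet> e) - T s * (mu s \<bullet> e))) (at s)"
        by (intro DERIV_diff DERIV_cmult dscal[OF M s])
      moreover have "(- G s * (xi s \<bullet> e) + T s * (v s \<bullet> e)) - k * (- K s * (xi s \<bullet> e) - T s * (mu s \<bullet> e)) = 0"
        using Gk[OF s] T0' s by (simp add: algebra_simps)
      ultimately show "((\<lambda>t. F t \<bullet> e) has_real_derivative 0) (at s)" unfolding e by simp
    qed
    then show ?thesis using that by blast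
  qed
  obtain s0 where s0: "s0 \<in> I" using B(3) by auto
  have "\<forall>s\<in>I. v s \<bullet> d = - k"
  proof
    fix s assume s: "s \<in> I"
    have "v s \<bullet> F s = - k" unfolding F_def using frame[OF M s] by (simp add: inner_diff_right)
    then show "v s \<bullet> d = - k" using dF s by simp
  qed
  moreover have "d \<noteq> 0"
  proof
    assume "d = 0"
    have "mu s0 \<bullet> F s0 = 1" unfolding F_def using frame[OF M s0] by (simp add: inner_diff_right)
    then show False using dF s0 \<open>d = 0\<close> by simp
  qed
  ultimately show "v_helix I v" by (rule L_helix)
qed



lemma alg1:
  fixes T K T' K' a m q :: real
  assumes "q > 0" "q * q = T^2 + K^2" "K * a + T * m = 0"
  shows "((T' * a - K' * m) * q - (T * a - K * m) * ((T * T' + K * K') / q)) / (q * q) = 0"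
proof -
  have "(T' * a - K' * m) * (q * q) - (T * a - K * m) * (T * T' + K * K') = (K * a + T * m) * (T' * K - T * K')"
    unfolding assms(2) by (simp add: algebra_simps power2_eq_square)
  then have "(T' * a - K' * m) * (q * q) - (T * a - K * m) * (T * T' + K * K') = 0" using assms(3) by simp
  then have "(T' * a - K' * m) * q - (T * a - K * m) * ((T * T' + K * K') / q) = 0"
    using assms(1) by (simp add: field_simps)
  then show ?thesis by simp
qed

lemma alg2:
  fixes T K T' K' a m q c :: real
  assumes "q > 0" "q * q = T^2 + K^2" "K * a + T * m = 0"
    "K' * a + K * (K * c) + (T' * m + T * (T * c)) = 0"
  shows "(T' * K - T * K') / ((T^2 + K^2) * q) * ((T * a - K * m) / q) = c"
proof -
  have "(T * a - K * m) * (T' * K - T * K') + (T^2 + K^2) * (K' * a + T' * m) = (K * a + T * m) * (T * T' + K * K')"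
    by (simp add: algebra_simps power2_eq_square)
  then have e1: "(T * a - K * m) * (T' * K - T * K') = - (T^2 + K^2) * (K' * a + T' * m)"
    using assms(3) by (simp add: algebra_simps)
  have e2: "K' * a + T' * m = - (T^2 + K^2) * c" using assms(4) by (simp add: algebra_simps power2_eq_square)
  have e: "(T * a - K * m) * (T' * K - T * K') = (T^2 + K^2) * (T^2 + K^2) * c"
    unfolding e1 e2 by (simp add: algebra_simps)
  have Q: "T^2 + K^2 > 0" using assms(1,2) by (metis mult_pos_pos)
  show ?thesis
    using e assms(1) Q unfolding assms(2)[symmetric] by (simp add: field_simps)
qed

lemma alg3:
  fixes T K T' K' q k x mm ve :: real
  assumes "q > 0" "q * q = T^2 + K^2" "k = (T' * K - T * K') / ((T^2 + K^2) * q)"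
  shows "k * (- K * x - T * mm) + ((T' * x + T * (K * ve) - (K' * mm + K * (T * ve))) * q
            - (T * x - K * mm) * ((T * T' + K * K') / q)) / (q * q) = 0"
proof -
  have Q: "T^2 + K^2 > 0" using assms(1,2) by (metis mult_pos_pos)
  have i: "(T' * x - K' * mm) * (q * q) - (T * x - K * mm) * (T * T' + K * K') = (T' * K - T * K') * (K * x + T * mm)"
    unfolding assms(2) by (simp add: algebra_simps power2_eq_square)
  have "((T' * x + T * (K * ve) - (K' * mm + K * (T * ve))) * q
            - (T * x - K * mm) * ((T * T' + K * K') / q)) / (q * q)
      = ((T' * x - K' * mm) * (q * q) - (T * x - K * mm) * (T * T' + K * K')) / (q * q * q)"
    using assms(1) by (simp add: field_simps)
  also have "\<dots> = k * (K * x + T * mm)" unfolding i assms(3) assms(2)[symmetric]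
    using assms(1) by (simp add: field_simps)
  finally show ?thesis by (simp add: algebra_simps)
qed

lemma dq:
  assumes M: "myller_configuration I C xi mu v G K T"
    and nondeg: "\<forall>s\<in>I. (T s, K s) \<noteq> (0, 0)" and s: "s \<in> I"
  shows "((\<lambda>t. sqrt (T t ^ 2 + K t ^ 2)) has_real_derivative
            (T s * deriv T s + K s * deriv K s) / sqrt (T s ^ 2 + K s ^ 2)) (at s)"
    "T s ^ 2 + K s ^ 2 > 0" "sqrt (T s ^ 2 + K s ^ 2) > 0"
    "sqrt (T s ^ 2 + K s ^ 2) * sqrt (T s ^ 2 + K s ^ 2) = T s ^ 2 + K s ^ 2"
proof -
  have "T s \<noteq> 0 \<or> K s \<noteq> 0" using nondeg s by auto
  then show Q: "T s ^ 2 + K s ^ 2 > 0"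
    by (metis add_pos_nonneg add_nonneg_pos zero_le_power2 zero_less_power2)
  then show "sqrt (T s ^ 2 + K s ^ 2) > 0" by simp
  show "sqrt (T s ^ 2 + K s ^ 2) * sqrt (T s ^ 2 + K s ^ 2) = T s ^ 2 + K s ^ 2"
    using Q by simp
  have "((\<lambda>t. T t ^ 2 + K t ^ 2) has_real_derivative (2 * T s * deriv T s + 2 * K s * deriv K s)) (at s)"
    using DERIV_add[OF DERIV_mult[OF dTK(1)[OF M s] dTK(1)[OF M s]] DERIV_mult[OF dTK(2)[OF M s] dTK(2)[OF M s]]]
    by (simp add: power2_eq_square algebra_simps)
  note ch = DERIV_chain2[OF DERIV_real_sqrt[OF Q] this]
  have eq: "(T s * deriv T s + K s * deriv K s) / sqrt (T s ^ 2 + K s ^ 2) =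
     inverse (sqrt (T s ^ 2 + K s ^ 2)) / 2 * (2 * T s * deriv T s + 2 * K s * deriv K s)"
  proof -
    have "2 * T s * deriv T s + 2 * K s * deriv K s = 2 * (T s * deriv T s + K s * deriv K s)"
      by (simp add: algebra_simps)
    note two = this
    have g: "\<And>X y::real. X / y = inverse y / 2 * (2 * X)" by (simp add: field_simps)
    show ?thesis unfolding two by (rule g)
  qed
  show "((\<lambda>t. sqrt (T t ^ 2 + K t ^ 2)) has_real_derivative
            (T s * deriv T s + K s * deriv K s) / sqrt (T s ^ 2 + K s ^ 2)) (at s)"
    unfolding eq by (rule ch)
qed

lemma part2:
  assumes M: "myller_configuration I C xi mu v G K T"
    and nondeg: "\<forall>s\<in>I. (T s, K s) \<noteq> (0, 0)"
    and G0: "\<forall>s\<in>I. G s = 0"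
  shows "v_helix I v \<longleftrightarrow>
              (\<exists>c. \<forall>s\<in>I. - ((deriv T s * K s - T s * deriv K s)
                                 / (T s ^ 2 + K s ^ 2) powr (3/2)) = c)"
proof
  note B = basics[OF M]
  assume "v_helix I v"
  then obtain d c where d: "norm d = 1" "\<forall>s\<in>I. v s \<bullet> d = c" unfolding v_helix_def by auto
  have h0: "K s * (xi s \<bullet> d) + T s * (mu s \<bullet> d) = 0" if s: "s \<in> I" for s
  proof -
    have "- K s * (xi s \<bullet> d) - T s * (mu s \<bullet> d) = 0"
      by (rule L_deriv_of_const[OF B(1) s d(2) dscal(3)[OF M s]])
    then show ?thesis by simp
  qed
  have h1: "deriv K s * (xi s \<bullet> d) + K s * (K s * c) + (deriv T s * (mu s \<bullet> d) + T s * (T s * c)) = 0"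
    if s: "s \<in> I" for s
  proof -
    have "K s * (G s * (mu s \<bullet> d) + K s * (v s \<bullet> d)) + deriv K s * (xi s \<bullet> d) +
        (T s * (- G s * (xi s \<bullet> d) + T s * (v s \<bullet> d)) + deriv T s * (mu s \<bullet> d)) = 0"
      by (rule L_deriv_of_const[OF B(1) s _ DERIV_add[OF DERIV_mult'[OF dTK(2)[OF M s] dscal(1)[OF M s]]
          DERIV_mult'[OF dTK(1)[OF M s] dscal(2)[OF M s]]]]) (use h0 in auto)
    then show ?thesis using G0 d(2) s by (simp add: algebra_simps)
  qed
  define f where "f t = T t * (xi t \<bullet> d) - K t * (mu t \<bullet> d)" for t
  define q where "q t = sqrt (T t ^ 2 + K t ^ 2)" for t
  obtain b where b: "\<forall>s\<in>I. f s / q s = b"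
  proof -
    have "\<exists>b. \<forall>s\<in>I. f s / q s = b"
    proof (rule L_const[OF B(2)])
      fix s assume s: "s \<in> I"
      have D: "((\<lambda>t. f t / q t) has_real_derivative
         ((T s * (G s * (mu s \<bullet> d) + K s * (v s \<bullet> d)) + deriv T s * (xi s \<bullet> d)
           - (K s * (- G s * (xi s \<bullet> d) + T s * (v s \<bullet> d)) + deriv K s * (mu s \<bullet> d))) * q s
          - f s * ((T s * deriv T s + K s * deriv K s) / q s)) / (q s * q s)) (at s)"
        unfolding f_def q_def
        by (rule DERIV_divide[OF DERIV_diff[OF DERIV_mult'[OF dTK(1)[OF M s] dscal(1)[OF M s]]
          DERIV_mult'[OF dTK(2)[OF M s] dscal(2)[OF M s]]] dq(1)[OF M nondeg s]]) (use dq(3)[OF M nondeg s] in linarith)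
      have e: "T s * (G s * (mu s \<bullet> d) + K s * (v s \<bullet> d)) + deriv T s * (xi s \<bullet> d)
           - (K s * (- G s * (xi s \<bullet> d) + T s * (v s \<bullet> d)) + deriv K s * (mu s \<bullet> d))
           = deriv T s * (xi s \<bullet> d) - deriv K s * (mu s \<bullet> d)"
        using G0 s by (simp add: algebra_simps)
      have "((deriv T s * (xi s \<bullet> d) - deriv K s * (mu s \<bullet> d)) * q s
          - f s * ((T s * deriv T s + K s * deriv K s) / q s)) / (q s * q s) = 0"
        unfolding f_def q_def
        by (rule alg1[OF dq(3,4)[OF M nondeg s] h0[OF s]])
      note z1 = this
      show "((\<lambda>t. f t / q t) has_real_derivative 0) (at s)" using D unfolding e z1 .
    qed
    then show ?thesis using that by blast
  qed
  obtain s0 where s0: "s0 \<in> I" using B(3) by auto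
  have "b \<noteq> 0"
  proof
    assume "b = 0"
    then have "f s0 / q s0 = 0" using b s0 by simp
    then have f0: "f s0 = 0" using dq(3)[OF M nondeg s0] unfolding q_def by auto
    have Q: "T s0 ^ 2 + K s0 ^ 2 > 0" by (rule dq(2)[OF M nondeg s0])
    have "(xi s0 \<bullet> d) * (T s0 ^ 2 + K s0 ^ 2) = T s0 * f s0 + K s0 * (K s0 * (xi s0 \<bullet> d) + T s0 * (mu s0 \<bullet> d))"
      unfolding f_def by (simp add: algebra_simps power2_eq_square)
    then have a0: "xi s0 \<bullet> d = 0" using f0 h0[OF s0] Q by auto
    have "(mu s0 \<bullet> d) * (T s0 ^ 2 + K s0 ^ 2) = - K s0 * f s0 + T s0 * (K s0 * (xi s0 \<bullet> d) + T s0 * (mu s0 \<bullet> d))"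
      unfolding f_def by (simp add: algebra_simps power2_eq_square)
    then have m0: "mu s0 \<bullet> d = 0" using f0 h0[OF s0] Q by auto
    have "c * (T s0 ^ 2 + K s0 ^ 2) = 0" using h1[OF s0] a0 m0 by (simp add: algebra_simps power2_eq_square)
    then have "c = 0" using Q by auto
    then have "d = 0" using L_zero[of "v s0" "xi s0" d] frame[OF M s0] M s0 a0 m0 d(2)
      unfolding myller_configuration_def by (auto simp: inner_commute)
    then show False using d by simp
  qed
  have "- ((deriv T s * K s - T s * deriv K s) / (T s ^ 2 + K s ^ 2) powr (3/2)) = - (c / b)"
    if s: "s \<in> I" for s
  proof -
    have "(deriv T s * K s - T s * deriv K s) / ((T s ^ 2 + K s ^ 2) * q s) * (f s / q s) = c"
      unfolding f_def q_def by (rule alg2[OF dq(3,4)[OF M nondeg s] h0[OF s] h1[OF s]])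
    then have "(deriv T s * K s - T s * deriv K s) / ((T s ^ 2 + K s ^ 2) * q s) = c / b"
      using b s \<open>b \<noteq> 0\<close> by (simp add: field_simps)
    then show ?thesis using L_powr[OF dq(2)[OF M nondeg s]] unfolding q_def by simp
  qed
  then show "\<exists>c. \<forall>s\<in>I. - ((deriv T s * K s - T s * deriv K s) / (T s ^ 2 + K s ^ 2) powr (3/2)) = c"
    by blast
next
  note B = basics[OF M]
  assume "\<exists>c. \<forall>s\<in>I. - ((deriv T s * K s - T s * deriv K s) / (T s ^ 2 + K s ^ 2) powr (3/2)) = c"
  then obtain c0 where c0: "\<forall>s\<in>I. - ((deriv T s * K s - T s * deriv K s) / (T s ^ 2 + K s ^ 2) powr (3/2)) = c0"
    by auto
  define k where "k = - c0"
  define q where "q t = sqrt (T t ^ 2 + K t ^ 2)" for t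
  have kk: "k = (deriv T s * K s - T s * deriv K s) / ((T s ^ 2 + K s ^ 2) * q s)" if s: "s \<in> I" for s
    using c0 s L_powr[OF dq(2)[OF M nondeg s]] unfolding k_def q_def by auto
  define F where "F t = k *\<^sub>R v t + (T t / q t) *\<^sub>R xi t - (K t / q t) *\<^sub>R mu t" for t
  have Fe: "F t \<bullet> e = k * (v t \<bullet> e) + (T t * (xi t \<bullet> e) - K t * (mu t \<bullet> e)) / q t" for t e
    unfolding F_def by (simp add: inner_add_left inner_diff_left diff_divide_distrib)
  obtain d where dF: "\<forall>s\<in>I. F s = d"
  proof -
    have "\<exists>d. \<forall>s\<in>I. F s = d"
    proof (rule L_vec_const[OF B(2)])
      fix e s assume s: "s \<in> I"
      have e: "(\<lambda>t. F t \<bullet> e) = (\<lambda>t. k * (v t \<bullet> e) + (T t * (xi t \<bullet> e) - K t * (mu t \<bullet> e)) / q t)"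
        using Fe by auto
      have D: "((\<lambda>t. k * (v t \<bullet> e) + (T t * (xi t \<bullet> e) - K t * (mu t \<bullet> e)) / q t) has_real_derivative
         k * (- K s * (xi s \<bullet> e) - T s * (mu s \<bullet> e)) +
         ((T s * (G s * (mu s \<bullet> e) + K s * (v s \<bullet> e)) + deriv T s * (xi s \<bullet> e)
           - (K s * (- G s * (xi s \<bullet> e) + T s * (v s \<bullet> e)) + deriv K s * (mu s \<bullet> e))) * q s
          - (T s * (xi s \<bullet> e) - K s * (mu s \<bullet> e)) * ((T s * deriv T s + K s * deriv K s) / q s)) / (q s * q s)) (at s)"
        unfolding q_def
        by (rule DERIV_add[OF DERIV_cmult[OF dscal(3)[OF M s]] DERIV_divide[OF DERIV_diff[OF DERIV_mult'[OF dTK(1)[OF M s] dscal(1)[OF M s]]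
          DERIV_mult'[OF dTK(2)[OF M s] dscal(2)[OF M s]]] dq(1)[OF M nondeg s]]]) (use dq(3)[OF M nondeg s] in linarith)
      have z: "k * (- K s * (xi s \<bullet> e) - T s * (mu s \<bullet> e)) +
         ((deriv T s * (xi s \<bullet> e) + T s * (K s * (v s \<bullet> e)) - (deriv K s * (mu s \<bullet> e) + K s * (T s * (v s \<bullet> e)))) * q s
          - (T s * (xi s \<bullet> e) - K s * (mu s \<bullet> e)) * ((T s * deriv T s + K s * deriv K s) / q s)) / (q s * q s) = 0"
        unfolding q_def by (rule alg3[OF dq(3,4)[OF M nondeg s] kk[OF s, unfolded q_def]])
      have e2: "T s * (G s * (mu s \<bullet> e) + K s * (v s \<bullet> e)) + deriv T s * (xi s \<bullet> e)
           - (K s * (- G s * (xi s \<bullet> e) + T s * (v s \<bullet> e)) + deriv K s * (mu s \<bullet> e))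
           = deriv T s * (xi s \<bullet> e) + T s * (K s * (v s \<bullet> e)) - (deriv K s * (mu s \<bullet> e) + K s * (T s * (v s \<bullet> e)))"
        using G0 s by (simp add: algebra_simps)
      show "((\<lambda>t. F t \<bullet> e) has_real_derivative 0) (at s)" using D unfolding e e2 z .
    qed
    then show ?thesis using that by blast
  qed
  obtain s0 where s0: "s0 \<in> I" using B(3) by auto
  have "\<forall>s\<in>I. v s \<bullet> d = k"
  proof
    fix s assume s: "s \<in> I"
    have "v s \<bullet> F s = k" using Fe[of s "v s"] frame[OF M s] by (simp add: inner_commute)
    then show "v s \<bullet> d = k" using dF s by simp
  qed
  moreover have "d \<noteq> 0"
  proof
    assume "d = 0"
    have "xi s0 \<bullet> F s0 = T s0 / q s0" using Fe[of s0 "xi s0"] frame[OF M s0] by (simp add: inner_commute)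
    moreover have "mu s0 \<bullet> F s0 = - K s0 / q s0" using Fe[of s0 "mu s0"] frame[OF M s0] by (simp add: inner_commute)
    ultimately have "T s0 = 0" "K s0 = 0" using dF s0 \<open>d = 0\<close> dq(3)[OF M nondeg s0] unfolding q_def by auto
    then show False using nondeg s0 by auto
  qed
  ultimately show "v_helix I v" by (rule L_helix)
qed

theorem corollary26:
  fixes I :: "real set" and C xi mu v :: "real \<Rightarrow> real^3" and G K T :: "real \<Rightarrow> real"
  assumes M: "myller_configuration I C xi mu v G K T"
    and nondeg: "\<forall>s\<in>I. (T s, K s) \<noteq> (0, 0)"
  shows "((\<forall>s\<in>I. K s = 0) \<longrightarrow>
            (v_helix I v \<longleftrightarrow> (\<exists>c. \<forall>s\<in>I. - (G s / T s) = c)))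
       \<and> ((\<forall>s\<in>I. G s = 0) \<longrightarrow>
            (v_helix I v \<longleftrightarrow>
              (\<exists>c. \<forall>s\<in>I. - ((deriv T s * K s - T s * deriv K s)
                                 / (T s ^ 2 + K s ^ 2) powr (3/2)) = c)))
       \<and> ((\<forall>s\<in>I. T s = 0) \<longrightarrow>
            (v_helix I v \<longleftrightarrow> (\<exists>c. \<forall>s\<in>I. - (G s / K s) = c)))"
  using part1[OF M nondeg] part2[OF M nondeg] part3[OF M nondeg] by blast

end
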